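(* Let $Q=\{q(k)\}_{k\ge1}$ be a strictly increasing sequence of positive integers with $q(k+1)/q(k)\to\infty$. Then there exists $\alpha\in(\tfrac13,\tfrac23)$ such that $\{\alpha q(k)\}\to0$ as $k\to\infty$, where $\{x\}$ denotes the fractional part of $x$.
   Context: $\{x\}=x-\lfloor x\rfloor$ denotes the fractional part of a real number $x$. *)

theory Defs
  imports Complex_Main
begin

end

theory Submission
  imports Defs
begin

lemma frac_small:
  fixes x :: real and n :: int
  assumes "of_int n \<le> x" "x < of_int n + 1"
  shows "frac x = x - of_int n"
  using floor_unique[OF assms] by (simp add: frac_def)

lemma q_ge:
  fixes q :: "nat \<Rightarrow> nat"
  assumes pos: "\<And>k. k \<ge> 1 \<Longrightarrow> q k > 0"
    and incr: "\<And>k. k \<ge> 1 \<Longrightarrow> q k < q (Suc k)"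
  shows "k \<ge> 1 \<Longrightarrow> q k \<ge> k"
proof (induction k)
  case 0 then show ?case by simp
next
  case (Suc k)
  show ?case
  proof (cases "k = 0")
    case True then show ?thesis using pos[of 1] by simp
  next
    case False
    then have "q k \<ge> k" using Suc by simp
    moreover have "q k < q (Suc k)" using incr[of k] False by simp
    ultimately show ?thesis by simp
  qed
qed

lemma ratio_ev:
  fixes q :: "nat \<Rightarrow> nat"
  assumes pos: "\<And>k. k \<ge> 1 \<Longrightarrow> q k > 0"
    and ratio: "filterlim (\<lambda>k. real (q (Suc k)) / real (q k)) at_top sequentially"
  shows "\<exists>N\<ge>M. \<forall>j\<ge>N. R * real (q j) \<le> real (q (Suc j))"
proof -
  have "eventually (\<lambda>k. R \<le> real (q (Suc k)) / real (q k)) sequentially"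
    using ratio by (simp add: filterlim_at_top)
  then obtain N where N: "\<And>k. k \<ge> N \<Longrightarrow> R \<le> real (q (Suc k)) / real (q k)"
    by (auto simp: eventually_sequentially)
  show ?thesis
  proof (intro exI[of _ "max (max N M) 1"] conjI allI impI)
    show "max (max N M) 1 \<ge> M" by simp
    fix j assume j: "max (max N M) 1 \<le> j"
    then have "q j > 0" using pos by simp
    moreover have "R \<le> real (q (Suc j)) / real (q j)" using N j by simp
    ultimately show "R * real (q j) \<le> real (q (Suc j))"
      by (simp add: pos_le_divide_eq)
  qed
qed

theorem lemma3:
  fixes q :: "nat \<Rightarrow> nat"
  assumes pos: "\<And>k. k \<ge> 1 \<Longrightarrow> q k > 0"
    and incr: "\<And>k. k \<ge> 1 \<Longrightarrow> q k < q (Suc k)"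
    and ratio: "filterlim (\<lambda>k. real (q (Suc k)) / real (q k)) at_top sequentially"
  shows "\<exists>\<alpha>::real. 1/3 < \<alpha> \<and> \<alpha> < 2/3 \<and>
           (\<lambda>k. frac (\<alpha> * real (q k))) \<longlonglongrightarrow> 0"
proof -
  obtain K where K5: "K \<ge> 5" and K4: "\<forall>j\<ge>K. 4 * real (q j) \<le> real (q (Suc j))"
    using ratio_ev[of q 5 4, OF pos ratio] by auto
  have qpos: "\<And>j. j \<ge> K \<Longrightarrow> real (q j) > 0" using pos K5 by simp
  have qK: "real (q K) \<ge> 5" using q_ge[of q K, OF pos incr] K5 by simp
  define c :: real where "c = real_of_int (\<lfloor>real (q K) / 3\<rfloor> + 1) / real (q K)"
  define a where "a = rec_nat c (\<lambda>k x. if k < K then c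
      else real_of_int \<lceil>real (q (Suc k)) * x\<rceil> / real (q (Suc k)))"
  have a0: "a 0 = c" by (simp add: a_def)
  have aS: "\<And>k. a (Suc k) = (if k < K then c
      else real_of_int \<lceil>real (q (Suc k)) * a k\<rceil> / real (q (Suc k)))"
    by (simp add: a_def)
  have aK: "a K = c" using a0 aS by (cases K) auto
  have aint: "\<And>k. k \<ge> K \<Longrightarrow> \<exists>n::int. a k * real (q k) = real_of_int n"
  proof -
    fix k assume k: "k \<ge> K"
    show "\<exists>n::int. a k * real (q k) = real_of_int n"
    proof (cases "k = K")
      case True then show ?thesis using aK qpos[of K] by (auto simp: c_def intro: exI[of _ "\<lfloor>real (q K) / 3\<rfloor> + 1"])
    next
      case False
      then obtain j where j: "k = Suc j" "j \<ge> K" using k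
        by (metis Suc_le_D le_antisym not_less_eq_eq)
      then show ?thesis using aS[of j] qpos[of k] k by auto
    qed
  qed
  have astep: "\<And>k. k \<ge> K \<Longrightarrow> a k \<le> a (Suc k) \<and> a (Suc k) \<le> a k + 1 / real (q (Suc k))"
  proof -
    fix k assume k: "k \<ge> K"
    have qs: "real (q (Suc k)) > 0" using qpos[of "Suc k"] k by simp
    let ?x = "real (q (Suc k)) * a k"
    have "?x \<le> real_of_int \<lceil>?x\<rceil>" "real_of_int \<lceil>?x\<rceil> < ?x + 1" by linarith+
    then have "a k \<le> real_of_int \<lceil>?x\<rceil> / real (q (Suc k))"
        "real_of_int \<lceil>?x\<rceil> / real (q (Suc k)) \<le> a k + 1 / real (q (Suc k))"
      using qs by (simp_all add: field_simps)
    then show "a k \<le> a (Suc k) \<and> a (Suc k) \<le> a k + 1 / real (q (Suc k))"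
      using aS[of k] k by simp
  qed
  have amono: "\<And>k m. K \<le> k \<Longrightarrow> k \<le> m \<Longrightarrow> a k \<le> a m"
  proof -
    fix k m :: nat assume kk: "K \<le> k" and km: "k \<le> m"
    from km show "a k \<le> a m"
    proof (induction m rule: dec_induct)
      case base then show ?case by simp
    next
      case (step m) then show ?case using astep[of m] kk by simp
    qed
  qed
  have G: "\<And>R K' k m. R > 1 \<Longrightarrow> K' \<ge> K \<Longrightarrow> (\<forall>j\<ge>K'. R * real (q j) \<le> real (q (Suc j)))
      \<Longrightarrow> K' \<le> k \<Longrightarrow> k \<le> m \<Longrightarrow>
      a m - a k \<le> 1 / ((R - 1) * real (q k)) - 1 / ((R - 1) * real (q m))"
  proof -
    fix R :: real and K' k m :: nat
    assume R: "R > 1" and K': "K' \<ge> K" and Rq: "\<forall>j\<ge>K'. R * real (q j) \<le> real (q (Suc j))"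
      and km: "K' \<le> k" "k \<le> m"
    from km(2) show "a m - a k \<le> 1 / ((R - 1) * real (q k)) - 1 / ((R - 1) * real (q m))"
    proof (induction m rule: dec_induct)
      case base then show ?case by simp
    next
      case (step m)
      have m: "m \<ge> K" "m \<ge> K'" using step km K' by auto
      have qm: "real (q m) > 0" using qpos m by simp
      have qs: "real (q (Suc m)) > 0" using qpos m by simp
      have rq: "R * real (q m) \<le> real (q (Suc m))" using Rq m by simp
      have "1 / real (q (Suc m)) + 1 / ((R - 1) * real (q (Suc m)))
            = R / ((R - 1) * real (q (Suc m)))" using R qs by (simp add: field_simps)
      also have "\<dots> \<le> 1 / ((R - 1) * real (q m))"
      proof -
        have h: "0 \<le> (R - 1) * (real (q (Suc m)) - R * real (q m))" using R rq by simp
        then have h2: "0 \<le> R * real (q (Suc m)) - real (q (Suc m)) - R * (R * real (q m)) + R * real (q m)"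
          by (simp add: algebra_simps)
        show ?thesis using R qs qm h2 by (simp add: field_simps)
      qed
      finally have key: "1 / real (q (Suc m)) + 1 / ((R - 1) * real (q (Suc m)))
           \<le> 1 / ((R - 1) * real (q m))" .
      show ?case using step.IH astep[OF m(1)] key by linarith
    qed
  qed
  have Gb: "\<And>R K' k m. R > 1 \<Longrightarrow> K' \<ge> K \<Longrightarrow> (\<forall>j\<ge>K'. R * real (q j) \<le> real (q (Suc j)))
      \<Longrightarrow> K' \<le> k \<Longrightarrow> k \<le> m \<Longrightarrow> a m \<le> a k + 1 / ((R - 1) * real (q k))"
  proof -
    fix R :: real and K' k m :: nat
    assume R: "R > 1" and K': "K' \<ge> K" and Rq: "\<forall>j\<ge>K'. R * real (q j) \<le> real (q (Suc j))"
      and km: "K' \<le> k" "k \<le> m"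
    have "1 / ((R - 1) * real (q m)) \<ge> 0" using R qpos[of m] km K' by simp
    then show "a m \<le> a k + 1 / ((R - 1) * real (q k))" using G[OF R K' Rq km] by linarith
  qed
  have inc: "incseq (\<lambda>n. a (n + K))"
    by (rule incseq_SucI) (simp add: astep)
  have bnd: "\<forall>i. a (i + K) \<le> a K + 1 / ((4 - 1) * real (q K))"
    using Gb[of 4 K K "_ + K"] K4 by simp
  obtain L where L: "(\<lambda>n. a (n + K)) \<longlonglongrightarrow> L" "\<forall>i. a (i + K) \<le> L"
    using incseq_convergent[OF inc bnd] by blast
  have La: "a \<longlonglongrightarrow> L" using LIMSEQ_offset[OF L(1)] .
  have Lge: "\<And>k. k \<ge> K \<Longrightarrow> a k \<le> L"
    using L(2) by (metis le_add_diff_inverse2)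
  have Lle: "\<And>R K' k. R > 1 \<Longrightarrow> K' \<ge> K \<Longrightarrow> (\<forall>j\<ge>K'. R * real (q j) \<le> real (q (Suc j)))
      \<Longrightarrow> K' \<le> k \<Longrightarrow> L \<le> a k + 1 / ((R - 1) * real (q k))"
  proof -
    fix R :: real and K' k :: nat
    assume R: "R > 1" and K': "K' \<ge> K" and Rq: "\<forall>j\<ge>K'. R * real (q j) \<le> real (q (Suc j))"
      and k: "K' \<le> k"
    show "L \<le> a k + 1 / ((R - 1) * real (q k))"
      by (rule LIMSEQ_le_const2[OF La]) (use Gb[OF R K' Rq k] in blast)
  qed
  show ?thesis
  proof (intro exI[of _ L] conjI)
    have "a K > 1/3" using qK by (simp add: aK c_def field_simps) linarith
    then show "1/3 < L" using Lge[of K] by simp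
    have "a K \<le> 1/3 + 1 / real (q K)" using qK by (simp add: aK c_def field_simps) linarith
    moreover have "L \<le> a K + 1 / ((4 - 1) * real (q K))" using Lle[of 4 K K] K4 by simp
    moreover have "1 / real (q K) + 1 / ((4 - 1) * real (q K)) < 1/3"
      using qK by (simp add: field_simps)
    ultimately show "L < 2/3" by linarith
    show "(\<lambda>k. frac (L * real (q k))) \<longlonglongrightarrow> 0"
    proof (rule LIMSEQ_I)
      fix r :: real assume r: "0 < r"
      define R where "R = max 4 (2 + 1 / r)"
      have R1: "R > 1" by (simp add: R_def)
      have Rr: "1 / (R - 1) < r"
      proof -
        have "R - 1 > 1 / r" unfolding R_def by linarith
        then have "1 < (R - 1) * r" using r by (simp add: field_simps)
        moreover have "R - 1 > 0" using R1 by simp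
        ultimately show ?thesis by (simp add: divide_less_eq mult.commute)
      qed
      have Rr1: "1 / (R - 1) < 1" unfolding R_def by (simp add: field_simps)
      obtain K' where K': "K' \<ge> K" "\<forall>j\<ge>K'. R * real (q j) \<le> real (q (Suc j))"
        using ratio_ev[of q K R, OF pos ratio] by auto
      show "\<exists>no. \<forall>n\<ge>no. norm (frac (L * real (q n)) - 0) < r"
      proof (intro exI[of _ K'] allI impI)
        fix k assume k: "K' \<le> k"
        have kK: "k \<ge> K" using k K' by simp
        have qk: "real (q k) > 0" using qpos kK by simp
        obtain n where n: "a k * real (q k) = real_of_int n" using aint[OF kK] by blast
        have lo: "a k * real (q k) \<le> L * real (q k)" using Lge[OF kK] qk by simp
        have "L * real (q k) \<le> (a k + 1 / ((R - 1) * real (q k))) * real (q k)"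
          using Lle[OF R1 K'(1) K'(2) k] qk by simp
        also have "\<dots> = a k * real (q k) + 1 / (R - 1)" using qk R1 by (simp add: field_simps)
        finally have hi: "L * real (q k) \<le> a k * real (q k) + 1 / (R - 1)" .
        have f: "frac (L * real (q k)) = L * real (q k) - real_of_int n"
          by (rule frac_small) (use lo hi n Rr1 in linarith)+
        show "norm (frac (L * real (q k)) - 0) < r"
          using f lo hi n Rr by simp
      qed
    qed
  qed
qed

end
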